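(* Let $n\ge1$ and define $\check{\mathbf{H}}_c,\check{\mathbf{H}}_s\in\mathbb{R}^{n\times n}$ by $(\check{\mathbf{H}}_c)_{j,k}=\frac{1}{\sqrt n}\cos\frac{2jk\pi}{n}$, $(\check{\mathbf{H}}_s)_{j,k}=\frac{1}{\sqrt n}\sin\frac{2jk\pi}{n}$ for $j,k=0,\dots,n-1$, $\check{\mathbf{H}}^{\pm}:=\check{\mathbf{H}}_c\pm\check{\mathbf{H}}_s$, and $\check{\mathbf{F}}:=\check{\mathbf{H}}_c+i\check{\mathbf{H}}_s\in\mathbb{C}^{n\times n}$. Let $\mathbf{A}=\operatorname{Circ}(\mathbf{a})\in\mathbb{R}^{n\times n}$ be a symmetric circulant matrix with first column $\mathbf{a}=(a_k)_{k=0}^{n-1}$, $a_{n-i}=a_i$ for $i=1,\dots,n-1$, and let $\boldsymbol{\Lambda}:=\sqrt n\,\operatorname{Diag}(\check{\mathbf{H}}_c\mathbf{a})$. Then $\check{\mathbf{H}}^+\mathbf{A}\check{\mathbf{H}}^-=\check{\mathbf{H}}^-\mathbf{A}\check{\mathbf{H}}^+=\boldsymbol{\Lambda}\check{\mathbf{F}}^2=\check{\mathbf{F}}^2\boldsymbol{\Lambda}$.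
   Context: $\operatorname{Circ}(\mathbf{a})$ is the circulant matrix with first column $\mathbf{a}$, i.e. $(\mathbf{A})_{j,k}=a_{(j-k)\bmod n}$. $\operatorname{Diag}(\mathbf{v})$ is the diagonal matrix with diagonal $\mathbf{v}$. *)

theory Defs
  imports Complex_Main "Jordan_Normal_Form.Matrix"
begin

definition Hc :: "nat \<Rightarrow> real mat" where
  "Hc n = mat n n (\<lambda>(j,k). cos (2 * real j * real k * pi / real n) / sqrt (real n))"

definition Hs :: "nat \<Rightarrow> real mat" where
  "Hs n = mat n n (\<lambda>(j,k). sin (2 * real j * real k * pi / real n) / sqrt (real n))"

definition Hplus :: "nat \<Rightarrow> real mat" where
  "Hplus n = Hc n + Hs n"

definition Hminus :: "nat \<Rightarrow> real mat" where
  "Hminus n = Hc n - Hs n"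

definition Fmat :: "nat \<Rightarrow> complex mat" where
  "Fmat n = map_mat complex_of_real (Hc n) + \<i> \<cdot>\<^sub>m map_mat complex_of_real (Hs n)"

definition Circ :: "real vec \<Rightarrow> real mat" where
  "Circ a = mat (dim_vec a) (dim_vec a)
     (\<lambda>(j,k). a $ ((j + dim_vec a - k) mod dim_vec a))"

definition Diag :: "'a::zero vec \<Rightarrow> 'a mat" where
  "Diag v = mat (dim_vec v) (dim_vec v) (\<lambda>(j,k). if j = k then v $ j else 0)"

end

theory Submission imports Defs begin

lemma sum_cis_int:
  assumes n: "n > 0"
  shows "(\<Sum>m<n. cis (2*pi*real m*of_int r/real n)) = (if int n dvd r then of_nat n else 0)"
proof (cases "int n dvd r")
  case True
  then obtain q where q: "r = int n * q" by blast
  have "cis (2*pi*real m*of_int r/real n) = 1" for m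
  proof -
    have "2*pi*real m*of_int r/real n = 2*pi*of_int (int m * q)" using n by (simp add: q field_simps)
    then show ?thesis by (simp del: of_int_mult)
  qed
  then show ?thesis using True by simp
next
  case False
  define w where "w = cis (2*pi*of_int r/real n)"
  have w1: "w \<noteq> 1"
  proof
    assume "w = 1"
    then have "cos (2*pi*of_int r/real n) = 1" by (simp add: w_def complex_eq_iff)
    then obtain k :: int where "2*pi*of_int r/real n = of_int k * 2 * pi" by (auto simp: cos_one_2pi_int)
    then have "of_int r = real n * of_int k" using n by (simp add: field_simps)
    then have "r = int n * k" by (metis of_int_eq_iff of_int_mult of_int_of_nat_eq)
    then show False using False by simp
  qed
  have "(\<Sum>m<n. cis (2*pi*real m*of_int r/real n)) = (\<Sum>m<n. w ^ m)"
    by (intro sum.cong refl) (simp add: w_def DeMoivre mult_ac)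
  also have "\<dots> = (w ^ n - 1) / (w - 1)" using w1 by (subst geometric_sum) auto
  also have "w ^ n = 1"
  proof -
    have "w ^ n = cis (2*pi*of_int r)" using n by (simp add: w_def DeMoivre)
    also have "\<dots> = 1" by (simp del: cis_multiple_2pi add: cis_multiple_2pi[of "of_int r"])
    finally show ?thesis .
  qed
  finally show ?thesis using False by simp
qed

lemma sum_cos_int:
  assumes n: "n > 0"
  shows "(\<Sum>m<n. cos (2*pi*real m*of_int r/real n)) = (if int n dvd r then real n else 0)"
proof -
  have "Re (\<Sum>m<n. cis (2*pi*real m*of_int r/real n)) = (\<Sum>m<n. cos (2*pi*real m*of_int r/real n))"
    by (simp add: Re_sum)
  then show ?thesis using sum_cis_int[OF n, of r] by (auto split: if_splits)
qed

lemma sum_sin_int: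
  assumes n: "n > 0"
  shows "(\<Sum>m<n. sin (2*pi*real m*of_int r/real n)) = 0"
proof -
  have "Im (\<Sum>m<n. cis (2*pi*real m*of_int r/real n)) = (\<Sum>m<n. sin (2*pi*real m*of_int r/real n))"
    by (simp add: Im_sum)
  then show ?thesis using sum_cis_int[OF n, of r] by (auto split: if_splits)
qed


definition Jm :: "nat \<Rightarrow> real mat" where
  "Jm n = mat n n (\<lambda>(j,k). if n dvd (j+k) then 1 else 0)"

lemma carr: "Hc n \<in> carrier_mat n n" "Hs n \<in> carrier_mat n n" "Hplus n \<in> carrier_mat n n"
  "Hminus n \<in> carrier_mat n n" "Jm n \<in> carrier_mat n n" "Fmat n \<in> carrier_mat n n"
  by (auto simp: Hc_def Hs_def Hplus_def Hminus_def Jm_def Fmat_def)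

lemma sqrt_sq: "sqrt (real n) * sqrt (real n) = real n" by simp

lemma term1:
  assumes "n > 0"
  shows "(cos x + sin x)/sqrt (real n) * ((cos y - sin y)/sqrt (real n)) = (cos(x+y) + sin(x-y))/real n"
  using assms by (simp add: cos_add sin_diff algebra_simps flip: times_divide_eq_left)

lemma term2:
  assumes "n > 0"
  shows "(cos x - sin x)/sqrt (real n) * ((cos y + sin y)/sqrt (real n)) = (cos(x+y) + sin(y-x))/real n"
  using assms by (simp add: cos_add sin_diff algebra_simps flip: times_divide_eq_left)

lemma HpHm: assumes n: "n > 0" shows "Hplus n * Hminus n = Jm n"
proof (rule eq_matI)
  fix j k assume j: "j < dim_row (Jm n)" and k: "k < dim_col (Jm n)"
  then have jk: "j < n" "k < n" by (auto simp: Jm_def)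
  have e: "Hplus n $$ (j,m) * Hminus n $$ (m,k) = (cos(2*pi*real m*of_int (int j + int k)/real n)
      + sin(2*pi*real m*of_int (int j - int k)/real n))/real n" if m: "m < n" for m
  proof -
    have "Hplus n $$ (j,m) * Hminus n $$ (m,k) =
      (cos (2 * real j * real m * pi / real n) + sin (2 * real j * real m * pi / real n))/sqrt (real n)
      * ((cos (2 * real m * real k * pi / real n) - sin (2 * real m * real k * pi / real n))/sqrt (real n))"
      using jk m by (simp add: Hplus_def Hminus_def Hc_def Hs_def add_divide_distrib diff_divide_distrib)
    also note term1[OF n]
    also have "2 * real j * real m * pi / real n + 2 * real m * real k * pi / real n
       = 2*pi*real m*of_int (int j + int k)/real n" by (simp add: algebra_simps add_divide_distrib)
    also have "2 * real j * real m * pi / real n - 2 * real m * real k * pi / real n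
       = 2*pi*real m*of_int (int j - int k)/real n" by (simp add: algebra_simps diff_divide_distrib)
    finally show ?thesis .
  qed
  have "(Hplus n * Hminus n) $$ (j,k) = (\<Sum>m<n. (cos(2*pi*real m*of_int (int j + int k)/real n)
      + sin(2*pi*real m*of_int (int j - int k)/real n))/real n)"
    using jk e carr[of n] by (simp add: scalar_prod_def atLeast0LessThan)
  also have "\<dots> = (if n dvd (j+k) then 1 else 0)"
    unfolding sum_divide_distrib[symmetric] sum.distrib sum_cos_int[OF n] sum_sin_int[OF n]
    using n by (simp flip: of_nat_add)
  finally show "(Hplus n * Hminus n) $$ (j,k) = Jm n $$ (j,k)" using jk by (simp add: Jm_def)
qed (auto simp: Jm_def Hplus_def Hminus_def Hc_def Hs_def)


lemma cos_shift: "cos (y + 2*real k*pi) = cos y" by (simp add: cos_add)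
lemma sin_shift: "sin (y + 2*real k*pi) = sin y" by (simp add: sin_add)
lemma sin_refl: "sin (2*real k*pi - y) = - sin y" by (simp add: sin_diff)

definition lam :: "real vec \<Rightarrow> nat \<Rightarrow> nat \<Rightarrow> real" where
  "lam a n k = (\<Sum>m<n. cos (2*real k*real m*pi/real n) * a$m)"

lemma sin_sym:
  assumes n: "n > 0" and sym: "\<forall>i\<in>{1..n-1}. a $ (n - i) = a $ i"
  shows "(\<Sum>m<n. a$m * sin (2*real m*real k*pi/real n)) = 0"
proof -
  define \<psi> where "\<psi> m = (if m = 0 then 0 else n - m)" for m
  let ?g = "\<lambda>m. a$m * sin (2*real m*real k*pi/real n)"
  have "(\<Sum>m<n. ?g m) = (\<Sum>m<n. ?g (\<psi> m))"
    by (rule sum.reindex_bij_witness[where i=\<psi> and j=\<psi>]) (auto simp: \<psi>_def)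
  also have "\<dots> = (\<Sum>m<n. - ?g m)"
  proof (intro sum.cong refl)
    fix m assume m: "m \<in> {..<n}"
    show "?g (\<psi> m) = - ?g m"
    proof (cases "m = 0")
      case True then show ?thesis by (simp add: \<psi>_def)
    next
      case False
      have am: "a $ (n - m) = a $ m" using sym m False by auto
      have "2*real (n-m)*real k*pi/real n = 2*real k*pi - 2*real m*real k*pi/real n"
        using m n by (simp add: of_nat_diff field_simps)
      then show ?thesis using False am by (simp add: \<psi>_def sin_refl)
    qed
  qed
  also have "\<dots> = - (\<Sum>m<n. ?g m)" by (simp add: sum_negf)
  finally show ?thesis by simp
qed

lemma circ_trig:
  assumes n: "n > 0" and sym: "\<forall>i\<in>{1..n-1}. a $ (n - i) = a $ i"
    and j: "j < n" and k: "k < n"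
  shows "(\<Sum>l<n. a$((j+n-l) mod n) * cos (2*real l*real k*pi/real n))
           = cos (2*real j*real k*pi/real n) * lam a n k"
    and "(\<Sum>l<n. a$((j+n-l) mod n) * sin (2*real l*real k*pi/real n))
           = sin (2*real j*real k*pi/real n) * lam a n k"
proof -
  define \<phi> where "\<phi> m = (if m \<le> j then j - m else j + n - m)" for m
  have phi: "(j+n-m) mod n = \<phi> m" if "m < n" for m
  proof (cases "m \<le> j")
    case True
    then have e: "j + n - m = (j - m) + n" by simp
    have "(j - m) mod n = j - m" using j by simp
    then show ?thesis using True by (simp only: e mod_add_self2) (simp add: \<phi>_def)
  next
    case False then show ?thesis using that by (simp add: \<phi>_def)
  qed
  have phiphi: "(j+n-\<phi> m) mod n = m" if "m < n" for m
  proof (cases "m \<le> j")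
    case True
    then have "j + n - \<phi> m = m + n" by (simp add: \<phi>_def)
    then show ?thesis using that by simp
  next
    case False then show ?thesis using that by (simp add: \<phi>_def)
  qed
  have ang: "2*real (\<phi> m)*real k*pi/real n = (2*real j*real k*pi/real n - 2*real m*real k*pi/real n)
      + (if m \<le> j then 0 else 2*real k*pi)" if "m < n" for m
    using that n j by (auto simp: \<phi>_def of_nat_diff field_simps)
  have reidx: "(\<Sum>l<n. f l) = (\<Sum>m<n. f (\<phi> m))" for f :: "nat \<Rightarrow> real"
    by (rule sum.reindex_bij_witness[where i=\<phi> and j=\<phi>]) (use j in \<open>auto simp: \<phi>_def\<close>)
  define X where "X = 2*real j*real k*pi/real n"
  define Y where "Y m = 2*real m*real k*pi/real n" for m
  have S0: "(\<Sum>m<n. a$m * sin (Y m)) = 0" using sin_sym[OF n sym] by (simp add: Y_def)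
  have L: "lam a n k = (\<Sum>m<n. a$m * cos (Y m))"
    unfolding lam_def Y_def by (intro sum.cong refl) (simp add: mult_ac)
  have "(\<Sum>l<n. a$((j+n-l) mod n) * cos (2*real l*real k*pi/real n))
     = (\<Sum>m<n. a$m * cos (X - Y m))"
    apply (subst reidx)
    apply (intro sum.cong refl)
    apply (simp add: phi phiphi ang X_def Y_def cos_shift)
    done
  also have "\<dots> = cos X * (\<Sum>m<n. a$m * cos (Y m)) + sin X * (\<Sum>m<n. a$m * sin (Y m))"
    by (simp add: cos_diff sum_distrib_left sum.distrib algebra_simps)
  finally show "(\<Sum>l<n. a$((j+n-l) mod n) * cos (2*real l*real k*pi/real n))
           = cos (2*real j*real k*pi/real n) * lam a n k" using S0 L by (simp add: X_def)
  have "(\<Sum>l<n. a$((j+n-l) mod n) * sin (2*real l*real k*pi/real n))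
     = (\<Sum>m<n. a$m * sin (X - Y m))"
    apply (subst reidx)
    apply (intro sum.cong refl)
    apply (simp add: phi phiphi ang X_def Y_def sin_shift)
    done
  also have "\<dots> = sin X * (\<Sum>m<n. a$m * cos (Y m)) - cos X * (\<Sum>m<n. a$m * sin (Y m))"
    by (simp add: sin_diff sum_distrib_left sum_subtractf algebra_simps)
  finally show "(\<Sum>l<n. a$((j+n-l) mod n) * sin (2*real l*real k*pi/real n))
           = sin (2*real j*real k*pi/real n) * lam a n k" using S0 L by (simp add: X_def)
qed


lemma HmHp: assumes n: "n > 0" shows "Hminus n * Hplus n = Jm n"
proof (rule eq_matI)
  fix j k assume j: "j < dim_row (Jm n)" and k: "k < dim_col (Jm n)"
  then have jk: "j < n" "k < n" by (auto simp: Jm_def)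
  have e: "Hminus n $$ (j,m) * Hplus n $$ (m,k) = (cos(2*pi*real m*of_int (int j + int k)/real n)
      + sin(2*pi*real m*of_int (int k - int j)/real n))/real n" if m: "m < n" for m
  proof -
    have "Hminus n $$ (j,m) * Hplus n $$ (m,k) =
      (cos (2 * real j * real m * pi / real n) - sin (2 * real j * real m * pi / real n))/sqrt (real n)
      * ((cos (2 * real m * real k * pi / real n) + sin (2 * real m * real k * pi / real n))/sqrt (real n))"
      using jk m by (simp add: Hplus_def Hminus_def Hc_def Hs_def add_divide_distrib diff_divide_distrib)
    also note term2[OF n]
    also have "2 * real j * real m * pi / real n + 2 * real m * real k * pi / real n
       = 2*pi*real m*of_int (int j + int k)/real n" by (simp add: algebra_simps add_divide_distrib)
    also have "2 * real m * real k * pi / real n - 2 * real j * real m * pi / real n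
       = 2*pi*real m*of_int (int k - int j)/real n" by (simp add: algebra_simps diff_divide_distrib)
    finally show ?thesis .
  qed
  have "(Hminus n * Hplus n) $$ (j,k) = (\<Sum>m<n. (cos(2*pi*real m*of_int (int j + int k)/real n)
      + sin(2*pi*real m*of_int (int k - int j)/real n))/real n)"
    using jk e carr[of n] by (simp add: scalar_prod_def atLeast0LessThan)
  also have "\<dots> = (if n dvd (j+k) then 1 else 0)"
    unfolding sum_divide_distrib[symmetric] sum.distrib sum_cos_int[OF n] sum_sin_int[OF n]
    using n by (simp flip: of_nat_add)
  finally show "(Hminus n * Hplus n) $$ (j,k) = Jm n $$ (j,k)" using jk by (simp add: Jm_def)
qed (auto simp: Jm_def Hplus_def Hminus_def Hc_def Hs_def)

definition Dm :: "real vec \<Rightarrow> nat \<Rightarrow> real mat" where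
  "Dm a n = mat n n (\<lambda>(i,i'). if i = i' then lam a n i else 0)"

lemma Dm_carr: "Dm a n \<in> carrier_mat n n" by (simp add: Dm_def)

lemma Lam_eq:
  assumes n: "n > 0" and d: "dim_vec a = n"
  shows "sqrt (real n) \<cdot>\<^sub>m Diag (Hc n *\<^sub>v a) = Dm a n"
proof (rule eq_matI)
  fix i i' assume i: "i < dim_row (Dm a n)" "i' < dim_col (Dm a n)"
  then have ii: "i < n" "i' < n" by (auto simp: Dm_def)
  have "sqrt (real n) * (Hc n *\<^sub>v a) $ i = lam a n i"
    using ii d n by (simp add: Hc_def scalar_prod_def lam_def atLeast0LessThan sum_distrib_left)
  then show "(sqrt (real n) \<cdot>\<^sub>m Diag (Hc n *\<^sub>v a)) $$ (i, i') = Dm a n $$ (i, i')"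
    using ii by (auto simp: Diag_def Dm_def Hc_def)
qed (auto simp: Dm_def Diag_def Hc_def)

lemma diag_right:
  assumes A: "A \<in> carrier_mat n n" and j: "j < n" and k: "k < n"
  shows "(A * mat n n (\<lambda>(i,i'). if i = i' then d i else 0)) $$ (j,k) = A $$ (j,k) * d k"
proof -
  have "(A * mat n n (\<lambda>(i,i'). if i = i' then d i else 0)) $$ (j,k)
     = (\<Sum>i\<in>{0..<n}. A $$ (j,i) * (if i = k then d k else 0))"
    using A j k by (simp add: scalar_prod_def cong: if_cong)
  also have "\<dots> = (\<Sum>i\<in>{0..<n}. if i = k then A $$ (j,k) * d k else 0)"
    by (intro sum.cong refl) auto
  also have "\<dots> = A $$ (j,k) * d k" using k by simp
  finally show ?thesis .
qed

lemma diag_left: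
  assumes A: "A \<in> carrier_mat n n" and j: "j < n" and k: "k < n"
  shows "(mat n n (\<lambda>(i,i'). if i = i' then d i else 0) * A) $$ (j,k) = d j * A $$ (j,k)"
proof -
  have "(mat n n (\<lambda>(i,i'). if i = i' then d i else 0) * A) $$ (j,k)
     = (\<Sum>i\<in>{0..<n}. (if j = i then d j else 0) * A $$ (i,k))"
    using A j k by (simp add: scalar_prod_def cong: if_cong)
  also have "\<dots> = (\<Sum>i\<in>{0..<n}. if i = j then d j * A $$ (j,k) else 0)"
    by (intro sum.cong refl) auto
  also have "\<dots> = d j * A $$ (j,k)" using j by simp
  finally show ?thesis .
qed

lemma JD: assumes n: "n > 0" and sym: "\<forall>i\<in>{1..n-1}. a $ (n - i) = a $ i"
  shows "Jm n * Dm a n = Dm a n * Jm n"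
proof (rule eq_matI)
  fix j k assume "j < dim_row (Dm a n * Jm n)" "k < dim_col (Dm a n * Jm n)"
  then have jk: "j < n" "k < n" by (auto simp: Dm_def Jm_def)
  have "lam a n j = lam a n k" if dv: "n dvd (j+k)"
  proof -
    have "cos (2*real j*real m*pi/real n) = cos (2*real k*real m*pi/real n)" for m
    proof (cases "j = 0")
      case True
      then have "k = 0" using dv jk by (auto elim!: dvdE)
      then show ?thesis using True by simp
    next
      case False
      obtain q where q: "j + k = n * q" using dv by (auto elim: dvdE)
      have "n * q < n * 2" using jk q by linarith
      then have "q < 2" by simp
      moreover have "q \<noteq> 0" using q False by (metis add_is_0 mult_0_right)
      ultimately have "q = 1" by simp
      then have "k = n - j" using q by simp
      then have "2*real k*real m*pi/real n = 2*real m*pi - 2*real j*real m*pi/real n"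
        using jk n by (simp add: of_nat_diff field_simps)
      then show ?thesis by (simp add: cos_diff)
    qed
    then show ?thesis by (simp add: lam_def)
  qed
  then show "(Jm n * Dm a n) $$ (j,k) = (Dm a n * Jm n) $$ (j,k)"
    unfolding Dm_def using jk diag_right[OF carr(5) jk] diag_left[OF carr(5) jk]
    by (auto simp: Jm_def)
qed (auto simp: Dm_def Jm_def)


lemma Circ_carr: "dim_vec a = n \<Longrightarrow> Circ a \<in> carrier_mat n n" by (simp add: Circ_def)

lemma circ_pm:
  assumes n: "n > 0" and d: "dim_vec a = n" and sym: "\<forall>i\<in>{1..n-1}. a $ (n - i) = a $ i"
  shows "Circ a * Hplus n = Hplus n * Dm a n" "Circ a * Hminus n = Hminus n * Dm a n"
proof -
  let ?C = "\<lambda>l k. cos (2*real l*real k*pi/real n)"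
  let ?S = "\<lambda>l k. sin (2*real l*real k*pi/real n)"
  have ent: "(Circ a * B) $$ (j,k) = (\<Sum>l<n. a$((j+n-l) mod n) * (?C l k + e * ?S l k)) / sqrt (real n)"
    if B: "B = mat n n (\<lambda>(l,k). (?C l k + e * ?S l k) / sqrt (real n))" and jk: "j < n" "k < n" for B e j k
    using jk d by (simp add: B Circ_def scalar_prod_def atLeast0LessThan sum_divide_distrib)
  have main: "(Circ a * B) $$ (j,k) = (B * Dm a n) $$ (j,k)"
    if B: "B = mat n n (\<lambda>(l,k). (?C l k + e * ?S l k) / sqrt (real n))" and jk: "j < n" "k < n" for B e j k
  proof -
    have "(\<Sum>l<n. a$((j+n-l) mod n) * (?C l k + e * ?S l k))
       = (\<Sum>l<n. a$((j+n-l) mod n) * ?C l k) + e * (\<Sum>l<n. a$((j+n-l) mod n) * ?S l k)"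
      by (simp add: sum.distrib sum_distrib_left algebra_simps)
    also have "\<dots> = (?C j k + e * ?S j k) * lam a n k"
      using circ_trig[OF n sym jk] by (simp add: algebra_simps)
    finally have "(Circ a * B) $$ (j,k) = (?C j k + e * ?S j k) * lam a n k / sqrt (real n)"
      using ent[OF B jk] by simp
    moreover have "(B * Dm a n) $$ (j,k) = B $$ (j,k) * lam a n k"
      unfolding Dm_def by (rule diag_right) (use B jk in auto)
    ultimately show ?thesis using jk by (simp add: B)
  qed
  have Bp: "Hplus n = mat n n (\<lambda>(l,k). (?C l k + 1 * ?S l k) / sqrt (real n))"
    by (rule eq_matI) (auto simp: Hplus_def Hc_def Hs_def add_divide_distrib)
  have Bm: "Hminus n = mat n n (\<lambda>(l,k). (?C l k + (-1) * ?S l k) / sqrt (real n))"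
    by (rule eq_matI) (auto simp: Hminus_def Hc_def Hs_def diff_divide_distrib)
  show "Circ a * Hplus n = Hplus n * Dm a n"
  proof (rule eq_matI)
    fix j k assume "j < dim_row (Hplus n * Dm a n)" "k < dim_col (Hplus n * Dm a n)"
    then have jk: "j < n" "k < n" using carr[of n] Dm_carr[of a n] by auto
    show "(Circ a * Hplus n) $$ (j, k) = (Hplus n * Dm a n) $$ (j, k)" by (rule main[OF Bp jk])
  qed (use carr[of n] Dm_carr[of a n] Circ_carr[OF d] in auto)
  show "Circ a * Hminus n = Hminus n * Dm a n"
  proof (rule eq_matI)
    fix j k assume "j < dim_row (Hminus n * Dm a n)" "k < dim_col (Hminus n * Dm a n)"
    then have jk: "j < n" "k < n" using carr[of n] Dm_carr[of a n] by auto
    show "(Circ a * Hminus n) $$ (j, k) = (Hminus n * Dm a n) $$ (j, k)" by (rule main[OF Bm jk])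
  qed (use carr[of n] Dm_carr[of a n] Circ_carr[OF d] in auto)
qed

lemma map_mult:
  assumes "A \<in> carrier_mat n n" "B \<in> carrier_mat n n"
  shows "map_mat complex_of_real (A * B) = map_mat complex_of_real A * map_mat complex_of_real B"
  by (rule eq_matI) (use assms in \<open>auto simp: scalar_prod_def\<close>)

lemma FF: assumes n: "n > 0" shows "Fmat n * Fmat n = map_mat complex_of_real (Jm n)"
proof (rule eq_matI)
  fix j k assume "j < dim_row (map_mat complex_of_real (Jm n))" "k < dim_col (map_mat complex_of_real (Jm n))"
  then have jk: "j < n" "k < n" by (auto simp: Jm_def)
  have Fe: "Fmat n $$ (p,q) = cis (2 * real p * real q * pi / real n) / complex_of_real (sqrt (real n))"
    if "p < n" "q < n" for p q
    using that by (simp add: Fmat_def Hc_def Hs_def complex_eq_iff)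
  have e: "Fmat n $$ (j,m) * Fmat n $$ (m,k) = cis (2*pi*real m*of_int (int j + int k)/real n) / of_nat n"
    if m: "m < n" for m
  proof -
    have "Fmat n $$ (j,m) * Fmat n $$ (m,k) = cis (2 * real j * real m * pi / real n + 2 * real m * real k * pi / real n)
      / (complex_of_real (sqrt (real n)) * complex_of_real (sqrt (real n)))"
      using jk m by (simp add: Fe cis_mult)
    also have "complex_of_real (sqrt (real n)) * complex_of_real (sqrt (real n)) = of_nat n"
      by (simp flip: of_real_mult)
    also have "2 * real j * real m * pi / real n + 2 * real m * real k * pi / real n
       = 2*pi*real m*of_int (int j + int k)/real n" by (simp add: algebra_simps add_divide_distrib)
    finally show ?thesis .
  qed
  have "(Fmat n * Fmat n) $$ (j,k) = (\<Sum>m<n. cis (2*pi*real m*of_int (int j + int k)/real n) / of_nat n)"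
    using jk e carr[of n] by (simp add: scalar_prod_def atLeast0LessThan)
  also have "\<dots> = (if n dvd (j+k) then 1 else 0)"
    unfolding sum_divide_distrib[symmetric] sum_cis_int[OF n]
    using n by (simp flip: of_nat_add)
  finally show "(Fmat n * Fmat n) $$ (j,k) = map_mat complex_of_real (Jm n) $$ (j,k)" using jk by (simp add: Jm_def)
qed (auto simp: Jm_def Fmat_def Hc_def Hs_def)

theorem mainTheorem5:
  fixes n :: nat and a :: "real vec"
  assumes "n \<ge> 1"
    and "dim_vec a = n"
    and "\<forall>i\<in>{1..n-1}. a $ (n - i) = a $ i"
  defines "\<Lambda> \<equiv> sqrt (real n) \<cdot>\<^sub>m Diag (Hc n *\<^sub>v a)"
  shows "Hplus n * Circ a * Hminus n = Hminus n * Circ a * Hplus n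
    \<and> map_mat complex_of_real (Hplus n * Circ a * Hminus n)
        = map_mat complex_of_real \<Lambda> * (Fmat n * Fmat n)
    \<and> map_mat complex_of_real \<Lambda> * (Fmat n * Fmat n)
        = (Fmat n * Fmat n) * map_mat complex_of_real \<Lambda>"
proof -
  have n: "n > 0" using assms(1) by simp
  note d = assms(2) and sym = assms(3)
  have L: "\<Lambda> = Dm a n" unfolding \<Lambda>_def by (rule Lam_eq[OF n d])
  note C = carr[of n] Dm_carr[of a n] Circ_carr[OF d]
  have 1: "Hplus n * Circ a * Hminus n = Jm n * Dm a n"
  proof -
    have "Hplus n * Circ a * Hminus n = Hplus n * (Circ a * Hminus n)" using C by simp
    also have "\<dots> = Hplus n * (Hminus n * Dm a n)" using circ_pm[OF n d sym] by simp
    also have "\<dots> = (Hplus n * Hminus n) * Dm a n" using C by simp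
    finally show ?thesis using HpHm[OF n] by simp
  qed
  have 2: "Hminus n * Circ a * Hplus n = Jm n * Dm a n"
  proof -
    have "Hminus n * Circ a * Hplus n = Hminus n * (Circ a * Hplus n)" using C by simp
    also have "\<dots> = Hminus n * (Hplus n * Dm a n)" using circ_pm[OF n d sym] by simp
    also have "\<dots> = (Hminus n * Hplus n) * Dm a n" using C by simp
    finally show ?thesis using HmHp[OF n] by simp
  qed
  have JD': "Jm n * Dm a n = Dm a n * Jm n" by (rule JD[OF n sym])
  have 3: "map_mat complex_of_real (Jm n * Dm a n) = map_mat complex_of_real \<Lambda> * (Fmat n * Fmat n)"
    unfolding FF[OF n] L JD' by (rule map_mult[OF Dm_carr carr(5)])
  have 4: "map_mat complex_of_real (Jm n * Dm a n) = (Fmat n * Fmat n) * map_mat complex_of_real \<Lambda>"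
    unfolding FF[OF n] L by (rule map_mult[OF carr(5) Dm_carr])
  show ?thesis using 1 2 3 4 by simp
qed

end
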